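(* Suppose $W^+$ is inverse S-shaped (with $W^+(0)=0$, $W^+(1)=1$). Then there exists a unique index $J'\in\{1,\dots,n^+\}$ such that $$h^+_{n^+}>h^+_{n^+-1}>\cdots>h^+_{J'}\quad\text{and}\quad h^+_{J'}\le h^+_{J'-1}<h^+_{J'-2}<\cdots<h^+_1$$ (such $J'$ is called the flexional index).
   Context: Fix $N\in\mathbb{N}$ and an integer $1\le n^+\le N$. A function $f:[0,1]\to\mathbb{R}$ is inverse S-shaped if it is strictly increasing, continuously differentiable, and there is $x_0\in[0,1]$ such that $f'$ is strictly decreasing on $[0,x_0]$ and strictly increasing on $[x_0,1]$. $W^+:[0,1]\to[0,1]$ is such a function with $W^+(0)=0$, $W^+(1)=1$, and $h^+_j:=W^+\!\left(\frac{n^+-j+1}{N}\right)-W^+\!\left(\frac{n^+-j}{N}\right)$ for $j=1,\dots,n^+$. Chains of inequalities with no terms are vacuous (e.g. the second chain when $J'=1$). *)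

theory Defs
  imports "HOL-Analysis.Analysis"
begin

definition inverse_S_shaped :: "(real \<Rightarrow> real) \<Rightarrow> bool" where
  "inverse_S_shaped f \<longleftrightarrow>
     strict_mono_on {0..1} f \<and>
     (\<exists>f'. (\<forall>x\<in>{0..1}. (f has_real_derivative f' x) (at x within {0..1})) \<and>
           continuous_on {0..1} f' \<and>
           (\<exists>x0\<in>{0..1}.
              (\<forall>x\<in>{0..x0}. \<forall>y\<in>{0..x0}. x < y \<longrightarrow> f' y < f' x) \<and>
              (\<forall>x\<in>{x0..1}. \<forall>y\<in>{x0..1}. x < y \<longrightarrow> f' x < f' y)))"

definition hplus :: "(real \<Rightarrow> real) \<Rightarrow> nat \<Rightarrow> nat \<Rightarrow> nat \<Rightarrow> real" where
  "hplus W N n j = W ((real n - real j + 1) / real N) - W ((real n - real j) / real N)"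

end

theory Submission
  imports Defs
begin

lemma mvt_piece:
  fixes W D :: "real \<Rightarrow> real"
  assumes der: "\<forall>x\<in>{0..1}. (W has_real_derivative D x) (at x within {0..1})"
    and "0 \<le> a" "a < b" "b \<le> 1"
  shows "\<exists>x\<in>{a<..<b}. W b - W a = (b - a) * D x"
proof -
  have "\<exists>x\<in>{a<..<b}. W b - W a = (\<lambda>h. D x * h) (b - a)"
  proof (rule mvt_simple)
    show "a < b" by fact
    fix x assume "a \<le> x" "x \<le> b"
    then have "(W has_real_derivative D x) (at x within {0..1})" using der assms by auto
    then have "(W has_real_derivative D x) (at x within {a..b})"
      by (rule DERIV_subset) (use assms in auto)
    then show "(W has_derivative (\<lambda>h. D x * h)) (at x within {a..b})"
      by (simp add: has_field_derivative_def)
  qed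
  then show ?thesis by (simp add: mult.commute)
qed

lemma key_analytic:
  fixes W D :: "real \<Rightarrow> real"
  assumes der: "\<forall>x\<in>{0..1}. (W has_real_derivative D x) (at x within {0..1})"
    and qc: "\<And>x y z. 0 \<le> x \<Longrightarrow> x < y \<Longrightarrow> y < z \<Longrightarrow> z \<le> 1 \<Longrightarrow> D y < max (D x) (D z)"
    and p0: "0 \<le> p" and d: "0 < d" and p3: "p + 3 * d \<le> 1"
    and hyp: "W (p + d) - W p \<le> W (p + 2*d) - W (p + d)"
  shows "W (p + 2*d) - W (p + d) < W (p + 3*d) - W (p + 2*d)"
proof -
  obtain x0 where x0: "x0 \<in> {p<..<p+d}" "W (p+d) - W p = ((p+d) - p) * D x0"
    using mvt_piece[OF der, of p "p+d"] p0 d p3 by auto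
  obtain x1 where x1: "x1 \<in> {p+d<..<p+2*d}" "W (p+2*d) - W (p+d) = ((p+2*d) - (p+d)) * D x1"
    using mvt_piece[OF der, of "p+d" "p+2*d"] p0 d p3 by auto
  obtain x2 where x2: "x2 \<in> {p+2*d<..<p+3*d}" "W (p+3*d) - W (p+2*d) = ((p+3*d) - (p+2*d)) * D x2"
    using mvt_piece[OF der, of "p+2*d" "p+3*d"] p0 d p3 by auto
  have "d * D x0 \<le> d * D x1" using hyp x0 x1 by simp
  then have "D x0 \<le> D x1" using d by simp
  moreover have "D x1 < max (D x0) (D x2)" using qc[of x0 x1 x2] x0 x1 x2 p0 p3 d by auto
  ultimately have "D x1 < D x2" by (auto simp: max_def split: if_splits)
  then have "d * D x1 < d * D x2" using d by simp
  then show ?thesis using x1 x2 by simp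
qed

lemma comb:
  fixes h :: "nat \<Rightarrow> real" and n :: nat
  assumes "1 \<le> n"
    and K: "\<And>j. 2 \<le> j \<Longrightarrow> j < n \<Longrightarrow> h (j+1) \<le> h j \<Longrightarrow> h j < h (j-1)"
  shows "\<exists>!J. J \<in> {1..n} \<and>
           (\<forall>j. J \<le> j \<and> j < n \<longrightarrow> h (j + 1) > h j) \<and>
           (2 \<le> J \<longrightarrow> h J \<le> h (J - 1)) \<and>
           (\<forall>j. 1 \<le> j \<and> j + 2 \<le> J \<longrightarrow> h (j + 1) < h j)"
proof -
  let ?S = "{j. 1 \<le> j \<and> j < n \<and> h (j+1) \<le> h j}"
  have finS: "finite ?S" by (rule finite_subset[of _ "{..<n}"]) auto
  have ex: "\<exists>J. J \<in> {1..n} \<and>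
           (\<forall>j. J \<le> j \<and> j < n \<longrightarrow> h (j + 1) > h j) \<and>
           (2 \<le> J \<longrightarrow> h J \<le> h (J - 1)) \<and>
           (\<forall>j. 1 \<le> j \<and> j + 2 \<le> J \<longrightarrow> h (j + 1) < h j)"
  proof (cases "?S = {}")
    case True
    have "\<forall>j. 1 \<le> j \<and> j < n \<longrightarrow> h (j + 1) > h j"
    proof (intro allI impI)
      fix j assume j: "1 \<le> j \<and> j < n"
      then have "j \<notin> ?S" using True by blast
      then show "h (j + 1) > h j" using j by auto
    qed
    then show ?thesis using assms(1)
      by (intro exI[of _ 1]) auto
  next
    case False
    define m where "m = Max ?S"
    have mS: "m \<in> ?S" using Max_in[OF finS False] m_def by simp
    have mmax: "\<And>j. j \<in> ?S \<Longrightarrow> j \<le> m" using Max_ge[OF finS] m_def by simp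
    have down: "d < m \<Longrightarrow> h (m - d + 1) \<le> h (m - d)" for d
    proof (induction d)
      case 0 then show ?case using mS by simp
    next
      case (Suc d)
      then have "h (m - d + 1) \<le> h (m - d)" by simp
      then have "h (m - d) < h (m - d - 1)" using K[of "m-d"] Suc.prems mS by auto
      moreover have e1: "m - Suc d + 1 = m - d" using Suc.prems by simp
      moreover have e2: "m - Suc d = m - d - 1" by simp
      ultimately show ?case by (simp only: e1 e2)
    qed
    have C: "h (j + 1) < h j" if "1 \<le> j" "j + 2 \<le> m + 1" for j
    proof -
      have "h (j+2) \<le> h (j+1)" using down[of "m - (j+1)"] that
        by (simp add: Suc_diff_le)
      then show ?thesis using K[of "j+1"] that mS by auto
    qed
    show ?thesis
    proof (intro exI[of _ "m+1"] conjI allI impI)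
      show "m + 1 \<in> {1..n}" using mS by auto
      fix j assume "m + 1 \<le> j \<and> j < n"
      then have "\<not> j \<le> m" by simp
      then have "j \<notin> ?S" using mmax by blast
      then show "h (j+1) > h j" using \<open>m + 1 \<le> j \<and> j < n\<close> by auto
    next
      show "h (m+1) \<le> h (m + 1 - 1)" using mS by simp
    next
      fix j assume "1 \<le> j \<and> j + 2 \<le> m + 1"
      then show "h (j+1) < h j" using C by auto
    qed
  qed
  show ?thesis
  proof (rule ex_ex1I[OF ex])
    fix J1 J2
    assume A: "J1 \<in> {1..n} \<and>
           (\<forall>j. J1 \<le> j \<and> j < n \<longrightarrow> h (j + 1) > h j) \<and>
           (2 \<le> J1 \<longrightarrow> h J1 \<le> h (J1 - 1)) \<and>
           (\<forall>j. 1 \<le> j \<and> j + 2 \<le> J1 \<longrightarrow> h (j + 1) < h j)"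
      and B: "J2 \<in> {1..n} \<and>
           (\<forall>j. J2 \<le> j \<and> j < n \<longrightarrow> h (j + 1) > h j) \<and>
           (2 \<le> J2 \<longrightarrow> h J2 \<le> h (J2 - 1)) \<and>
           (\<forall>j. 1 \<le> j \<and> j + 2 \<le> J2 \<longrightarrow> h (j + 1) < h j)"
    have lt: False if "Ja < Jb"
      "Ja \<in> {1..n}" "\<forall>j. Ja \<le> j \<and> j < n \<longrightarrow> h (j + 1) > h j"
      "Jb \<in> {1..n}" "2 \<le> Jb \<longrightarrow> h Jb \<le> h (Jb - 1)" for Ja Jb
    proof -
      have e: "Jb - 1 + 1 = Jb" using that by auto
      have "Ja \<le> Jb - 1 \<and> Jb - 1 < n" using that by auto
      then have "h (Jb - 1 + 1) > h (Jb - 1)" using that(3) by blast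
      then have "h Jb > h (Jb - 1)" by (simp only: e)
      moreover have "2 \<le> Jb" using that by auto
      ultimately show False using that(5) by linarith
    qed
    show "J1 = J2"
    proof (rule ccontr)
      assume "J1 \<noteq> J2"
      then consider "J1 < J2" | "J2 < J1" by linarith
      then show False
      proof cases
        case 1
        show False by (rule lt[of J1 J2]) (use 1 A B in blast)+
      next
        case 2
        show False by (rule lt[of J2 J1]) (use 2 A B in blast)+
      qed
    qed
  qed
qed

theorem lemma1:
  fixes W :: "real \<Rightarrow> real" and N n :: nat
  assumes "1 \<le> n" and "n \<le> N"
    and "inverse_S_shaped W" and "W 0 = 0" and "W 1 = 1"
  shows "\<exists>!J. J \<in> {1..n} \<and>
           (\<forall>j. J \<le> j \<and> j < n \<longrightarrow> hplus W N n (j + 1) > hplus W N n j) \<and>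
           (2 \<le> J \<longrightarrow> hplus W N n J \<le> hplus W N n (J - 1)) \<and>
           (\<forall>j. 1 \<le> j \<and> j + 2 \<le> J \<longrightarrow> hplus W N n (j + 1) < hplus W N n j)"
proof (rule comb[OF assms(1)])
  obtain D x0 where der: "\<forall>x\<in>{0..1}. (W has_real_derivative D x) (at x within {0..1})"
    and x0: "x0 \<in> {0..1}"
    and dec: "\<forall>x\<in>{0..x0}. \<forall>y\<in>{0..x0}. x < y \<longrightarrow> D y < D x"
    and inc: "\<forall>x\<in>{x0..1}. \<forall>y\<in>{x0..1}. x < y \<longrightarrow> D x < D y"
    using assms(3) unfolding inverse_S_shaped_def by blast
  have qc: "D y < max (D x) (D z)" if "0 \<le> x" "x < y" "y < z" "z \<le> 1" for x y z
  proof (cases "y \<le> x0")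
    case True
    then have "D y < D x" using dec that by auto
    then show ?thesis by simp
  next
    case False
    then have "D y < D z" using inc that x0 by auto
    then show ?thesis by simp
  qed
  fix j assume j: "2 \<le> j" "j < n" and hyp: "hplus W N n (j + 1) \<le> hplus W N n j"
  define p where "p = (real n - real j - 1) / real N"
  define d where "d = 1 / real N"
  have Npos: "real N > 0" using assms by simp
  have p0: "0 \<le> p" using j Npos unfolding p_def by simp
  have dpos: "0 < d" using Npos unfolding d_def by simp
  have p3: "p + 3 * d \<le> 1"
  proof -
    have "p + 3 * d = (real n - real j + 2) / real N" unfolding p_def d_def
      using Npos by (simp add: field_simps)
    also have "\<dots> \<le> 1" using j assms(2) Npos by simp
    finally show ?thesis .
  qed
  have e1: "(real n - real (j+1) + 1) / real N = p + d"
    and e2: "(real n - real (j+1)) / real N = p"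
    and e3: "(real n - real j + 1) / real N = p + 2*d"
    and e4: "(real n - real j) / real N = p + d"
    and e5: "(real n - real (j-1) + 1) / real N = p + 3*d"
    and e6: "(real n - real (j-1)) / real N = p + 2*d"
    unfolding p_def d_def using Npos j by (simp_all add: field_simps of_nat_diff)
  have "W (p + d) - W p \<le> W (p + 2*d) - W (p + d)"
    using hyp unfolding hplus_def e1 e2 e3 e4 .
  from key_analytic[OF der qc p0 dpos p3 this]
  show "hplus W N n j < hplus W N n (j - 1)"
    unfolding hplus_def e3 e4 e5 e6 by simp
qed

end
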